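(* Let $X = X(n;S)$ be a (simple, undirected) circulant graph. Then $X$ is edge-transitive if and only if it is arc-transitive. *)

theory Defs
  imports Main
begin

text \<open>Circulant graph X(n;S): vertex set Z_n = {0..<n}; connection set S \<subseteq> Z_n \ {0}
  with S = -S (simple, undirected); x ~ y iff y - x (mod n) \<in> S.\<close>

definition circulant_conn_set :: "nat \<Rightarrow> nat set \<Rightarrow> bool" where
  "circulant_conn_set n S \<longleftrightarrow> S \<subseteq> {1..<n} \<and> (\<forall>s\<in>S. n - s \<in> S)"

definition circ_adj :: "nat \<Rightarrow> nat set \<Rightarrow> nat \<Rightarrow> nat \<Rightarrow> bool" where
  "circ_adj n S x y \<longleftrightarrow> x < n \<and> y < n \<and> (y + n - x) mod n \<in> S"

definition graph_aut :: "'a set \<Rightarrow> ('a \<Rightarrow> 'a \<Rightarrow> bool) \<Rightarrow> ('a \<Rightarrow> 'a) \<Rightarrow> bool" where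
  "graph_aut V adj f \<longleftrightarrow> bij_betw f V V \<and>
     (\<forall>x\<in>V. \<forall>y\<in>V. adj x y \<longleftrightarrow> adj (f x) (f y))"

definition graph_edges :: "('a \<Rightarrow> 'a \<Rightarrow> bool) \<Rightarrow> 'a set set" where
  "graph_edges adj = {{x, y} | x y. adj x y}"

definition graph_arcs :: "('a \<Rightarrow> 'a \<Rightarrow> bool) \<Rightarrow> ('a \<times> 'a) set" where
  "graph_arcs adj = {(x, y). adj x y}"

definition edge_transitive :: "'a set \<Rightarrow> ('a \<Rightarrow> 'a \<Rightarrow> bool) \<Rightarrow> bool" where
  "edge_transitive V adj \<longleftrightarrow>
     (\<forall>e1\<in>graph_edges adj. \<forall>e2\<in>graph_edges adj. \<exists>f. graph_aut V adj f \<and> f ` e1 = e2)"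

definition arc_transitive :: "'a set \<Rightarrow> ('a \<Rightarrow> 'a \<Rightarrow> bool) \<Rightarrow> bool" where
  "arc_transitive V adj \<longleftrightarrow>
     (\<forall>(x, y)\<in>graph_arcs adj. \<forall>(u, v)\<in>graph_arcs adj.
        \<exists>f. graph_aut V adj f \<and> f x = u \<and> f y = v)"

end

theory Submission
  imports Defs
begin

lemma int_diff_mod:
  fixes n x y :: nat
  assumes "x < n" "y < n"
  shows "int ((y + n - x) mod n) = (int y - int x) mod int n"
proof -
  have "int ((y + n - x) mod n) = int (y + n - x) mod int n" by (simp add: zmod_int)
  also have "int (y + n - x) = int y - int x + int n" using assms by simp
  also have "(int y - int x + int n) mod int n = (int y - int x) mod int n" by simp
  finally show ?thesis .
qed

lemma adj_sym:
  assumes "circulant_conn_set n S" "circ_adj n S x y"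
  shows "circ_adj n S y x"
proof -
  have x: "x < n" and y: "y < n" and d: "(y + n - x) mod n \<in> S"
    using assms(2) by (auto simp: circ_adj_def)
  have S: "S \<subseteq> {1..<n}" "\<forall>s\<in>S. n - s \<in> S" using assms(1) by (auto simp: circulant_conn_set_def)
  let ?d = "(y + n - x) mod n"
  have "?d \<noteq> 0" using d S by auto
  hence "x \<noteq> y" by auto
  have "int ((x + n - y) mod n) = (int x - int y) mod int n" using int_diff_mod x y by simp
  also have "\<dots> = (- (int y - int x)) mod int n" by simp
  also have "\<dots> = int n - (int y - int x) mod int n"
  proof -
    have "(int y - int x) mod int n \<noteq> 0" using \<open>?d \<noteq> 0\<close> int_diff_mod[OF x y] by simp
    thus ?thesis by (metis zmod_zminus1_eq_if)
  qed
  also have "\<dots> = int (n - ?d)" using int_diff_mod[OF x y]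
    by (metis  x less_imp_of_nat_less mod_less_divisor of_nat_diff order.strict_trans1 le_less zero_less_iff_neq_zero not_less0 less_or_eq_imp_le)
  finally have "(x + n - y) mod n = n - ?d" by simp
  thus ?thesis using S d x y by (auto simp: circ_adj_def)
qed

definition flip :: "nat \<Rightarrow> nat \<Rightarrow> nat \<Rightarrow> nat" where
  "flip n c z = (c + n - z) mod n"

lemma int_flip:
  assumes "z < n"
  shows "int (flip n c z) = (int c - int z) mod int n"
proof -
  have "int (flip n c z) = int (c + n - z) mod int n" by (simp add: flip_def zmod_int)
  also have "int (c + n - z) = int c - int z + int n" using assms by simp
  finally show ?thesis by simp
qed

lemma flip_lt: "z < n \<Longrightarrow> flip n c z < n"
  by (simp add: flip_def)

lemma flip_flip:
  assumes "z < n" shows "flip n c (flip n c z) = z"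
proof -
  have "int (flip n c (flip n c z)) = (int c - (int c - int z) mod int n) mod int n"
    using int_flip[OF flip_lt[OF assms]] int_flip[OF assms] by simp
  also have "\<dots> = (int c - (int c - int z)) mod int n" by (simp add: mod_diff_right_eq)
  also have "\<dots> = int z" using assms by simp
  finally show ?thesis by simp
qed

lemma flip_diff:
  assumes "x < n" "y < n"
  shows "(flip n c y + n - flip n c x) mod n = (x + n - y) mod n"
proof -
  have "int ((flip n c y + n - flip n c x) mod n) = (int (flip n c y) - int (flip n c x)) mod int n"
    using int_diff_mod flip_lt assms by simp
  also have "\<dots> = ((int c - int y) mod int n - (int c - int x) mod int n) mod int n"
    using int_flip assms by simp
  also have "\<dots> = ((int c - int y) - (int c - int x)) mod int n" by (simp add: mod_diff_eq)
  also have "\<dots> = (int x - int y) mod int n" by simp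
  also have "\<dots> = int ((x + n - y) mod n)" using int_diff_mod assms by simp
  finally show ?thesis by simp
qed

lemma flip_aut:
  assumes "circulant_conn_set n S"
  shows "graph_aut {0..<n} (circ_adj n S) (flip n c)"
proof -
  have "bij_betw (flip n c) {0..<n} {0..<n}"
    by (rule bij_betw_byWitness[where f'="flip n c"]) (auto simp: flip_flip flip_lt)
  moreover have "circ_adj n S x y \<longleftrightarrow> circ_adj n S (flip n c x) (flip n c y)"
    if "x < n" "y < n" for x y
  proof -
    have "circ_adj n S (flip n c x) (flip n c y) \<longleftrightarrow> circ_adj n S y x"
      using that flip_lt flip_diff by (simp add: circ_adj_def)
    thus ?thesis using adj_sym[OF assms] by blast
  qed
  ultimately show ?thesis by (simp add: graph_aut_def)
qed

lemma flip_swap: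
  assumes "u < n" "v < n"
  shows "flip n ((u + v) mod n) u = v"
proof -
  have "int (flip n ((u + v) mod n) u) = (int ((u + v) mod n) - int u) mod int n"
    using int_flip assms by simp
  also have "\<dots> = ((int u + int v) mod int n - int u) mod int n" by (simp add: zmod_int)
  also have "\<dots> = ((int u + int v) - int u) mod int n" by (simp add: mod_diff_left_eq)
  also have "\<dots> = int v" using assms by simp
  finally show ?thesis by simp
qed

lemma aut_comp:
  assumes "graph_aut V adj f" "graph_aut V adj g"
  shows "graph_aut V adj (g \<circ> f)"
  using assms unfolding graph_aut_def
  by (auto intro: bij_betw_trans dest: bij_betwE)

theorem mainTheorem5:
  fixes n :: nat and S :: "nat set"
  assumes "n \<ge> 1" and "circulant_conn_set n S"
  shows "edge_transitive {0..<n} (circ_adj n S) \<longleftrightarrow> arc_transitive {0..<n} (circ_adj n S)"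
proof
  assume et: "edge_transitive {0..<n} (circ_adj n S)"
  show "arc_transitive {0..<n} (circ_adj n S)"
    unfolding arc_transitive_def
  proof (clarify)
    fix x y u v
    assume "(x, y) \<in> graph_arcs (circ_adj n S)" "(u, v) \<in> graph_arcs (circ_adj n S)"
    hence a1: "circ_adj n S x y" and a2: "circ_adj n S u v" by (auto simp: graph_arcs_def)
    have S: "S \<subseteq> {1..<n}" using assms(2) by (auto simp: circulant_conn_set_def)
    have "x \<noteq> y" using a1 S by (auto simp: circ_adj_def)
    have uv: "u < n" "v < n" using a2 by (auto simp: circ_adj_def)
    obtain f where f: "graph_aut {0..<n} (circ_adj n S) f" "f ` {x, y} = {u, v}"
      using et a1 a2 unfolding edge_transitive_def graph_edges_def by blast
    hence "(f x = u \<and> f y = v) \<or> (f x = v \<and> f y = u)"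
      by (auto simp: doubleton_eq_iff)
    thus "\<exists>f. graph_aut {0..<n} (circ_adj n S) f \<and> f x = u \<and> f y = v"
    proof
      assume "f x = u \<and> f y = v" thus ?thesis using f by blast
    next
      assume h: "f x = v \<and> f y = u"
      let ?g = "flip n ((u + v) mod n)"
      have "graph_aut {0..<n} (circ_adj n S) (?g \<circ> f)"
        using aut_comp f(1) flip_aut[OF assms(2)] by blast
      moreover have "?g v = u" using flip_swap[OF uv(2) uv(1)] by (simp add: add.commute)
      moreover have "?g u = v" using flip_swap[OF uv] .
      ultimately show ?thesis using h by (intro exI[of _ "?g \<circ> f"]) simp
    qed
  qed
next
  assume at: "arc_transitive {0..<n} (circ_adj n S)"
  show "edge_transitive {0..<n} (circ_adj n S)"
    unfolding edge_transitive_def graph_edges_def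
  proof (clarify)
    fix x y u v
    assume "circ_adj n S x y" "circ_adj n S u v"
    then obtain f where "graph_aut {0..<n} (circ_adj n S) f" "f x = u" "f y = v"
      using at unfolding arc_transitive_def graph_arcs_def by (auto 0 0) (metis (mono_tags, lifting) case_prodD case_prodI mem_Collect_eq)
    thus "\<exists>f. graph_aut {0..<n} (circ_adj n S) f \<and> f ` {x, y} = {u, v}" by auto
  qed
qed

end
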